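(* For every positive integer $N$ and all real $x,\delta\ge0$, \[ |\varrho_N(x)|\le\exp\!\left(-\frac{\pi^2\delta^2}{2}\cdot\#\mathcal{S}_1(N,\delta,x)\right). \]
   Context: For a positive integer $N$ and real $x$, $\varrho_N(x):=\prod_{n=1}^N\cos(\pi x/n)$. For $y\in\mathbb{R}$, $\|y\|$ denotes the distance from $y$ to the nearest integer. For positive integers $k,N$ and real $\delta,x\ge0$, $\mathcal{S}_k(N,\delta,x):=\{n\in\{1,\dots,N\} : \|x/n^k\|\ge\delta\}$. *)

theory Defs
  imports "HOL-Analysis.Analysis"
begin

definition rho :: "nat \<Rightarrow> real \<Rightarrow> real" where
  "rho N x = (\<Prod>n=1..N. cos (pi * x / real n))"

definition dist_int :: "real \<Rightarrow> real" where
  "dist_int y = (INF m\<in>(\<int>::real set). \<bar>y - m\<bar>)"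

definition S_set :: "nat \<Rightarrow> nat \<Rightarrow> real \<Rightarrow> real \<Rightarrow> nat set" where
  "S_set k N \<delta> x = {n \<in> {1..N}. dist_int (x / real n ^ k) \<ge> \<delta>}"

end

theory Submission
  imports Defs
begin

lemma dist_int_round: "dist_int y = \<bar>y - of_int (round y)\<bar>"
proof -
  have ne: "(\<int>::real set) \<noteq> {}" by auto
  have "(INF m\<in>(\<int>::real set). \<bar>y - m\<bar>) = \<bar>y - of_int (round y)\<bar>"
  proof (rule antisym)
    show "(INF m\<in>(\<int>::real set). \<bar>y - m\<bar>) \<le> \<bar>y - of_int (round y)\<bar>"
      by (rule cINF_lower) (auto intro: bdd_belowI[where m=0])
    show "\<bar>y - of_int (round y)\<bar> \<le> (INF m\<in>(\<int>::real set). \<bar>y - m\<bar>)"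
      using ne by (rule cINF_greatest) (auto elim!: Ints_cases intro: round_diff_minimal)
  qed
  then show ?thesis unfolding dist_int_def .
qed

lemma dist_int_le: "dist_int y \<le> 1/2" "dist_int y \<ge> 0"
  unfolding dist_int_round using of_int_round_abs_le[of y] by (auto simp: abs_minus_commute)

lemma abs_cos_dist: "\<bar>cos (pi * y)\<bar> = cos (pi * dist_int y)"
proof -
  define r where "r = round y"
  define d where "d = y - of_int r"
  have y: "pi * y = pi * d + pi * of_int r" by (simp add: d_def algebra_simps)
  have "\<bar>cos (pi * y)\<bar> = \<bar>cos (pi * d)\<bar>"
    unfolding y cos_add by simp
  also have "\<dots> = cos (pi * \<bar>d\<bar>)"
  proof -
    have "\<bar>d\<bar> \<le> 1/2" using of_int_round_abs_le[of y] by (simp add: d_def r_def abs_minus_commute)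
    then have "cos (pi * \<bar>d\<bar>) \<ge> 0"
      using pi_gt_zero by (intro cos_ge_zero) (auto simp: field_simps intro: order_trans[of _ 0])
    moreover have "cos (pi * d) = cos (pi * \<bar>d\<bar>)"
      by (cases "d \<ge> 0") auto
    ultimately show ?thesis by simp
  qed
  finally show ?thesis by (simp add: dist_int_round d_def r_def)
qed

lemma cos_exp_bound:
  fixes u :: real assumes "0 \<le> u" "u \<le> pi/2"
  shows "cos u \<le> exp (- u\<^sup>2 / 2)"
proof -
  define g where "g = (\<lambda>u::real. cos u * exp (u\<^sup>2 / 2))"
  have "g u \<le> g 0"
  proof (rule DERIV_nonpos_imp_nonincreasing[OF assms(1)])
    fix t assume t: "0 \<le> t" "t \<le> u"
    have D: "DERIV g t :> (- sin t * exp (t\<^sup>2/2) + cos t * (exp (t\<^sup>2/2) * t))"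
      unfolding g_def by (auto intro!: derivative_eq_intros simp: power2_eq_square algebra_simps)
    have "t * cos t \<le> sin t"
    proof (cases "t < pi/2")
      case True
      have c: "cos t > 0" using t True by (intro cos_gt_zero_pi) auto
      have "\<bar>t\<bar> \<le> \<bar>tan t\<bar>" using abs_tan_ge[of t] True t by simp
      moreover have "tan t \<ge> 0" using t True c sin_ge_zero[of t] pi_gt_zero by (simp add: tan_def)
      ultimately have "t \<le> sin t / cos t" using t by (simp add: tan_def)
      then show ?thesis using c by (simp add: field_simps)
    next
      case False
      then have "t = pi/2" using t assms by auto
      then have "cos t = 0" "sin t = 1" by (metis cos_pi_half, metis sin_pi_half)
      then show ?thesis by simp
    qed
    then have "- sin t * exp (t\<^sup>2/2) + cos t * (exp (t\<^sup>2/2) * t) \<le> 0"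
    proof -
      have "- sin t * exp (t\<^sup>2/2) + cos t * (exp (t\<^sup>2/2) * t) = exp (t\<^sup>2/2) * (t * cos t - sin t)"
        by (simp add: algebra_simps)
      also have "\<dots> \<le> 0" using \<open>t * cos t \<le> sin t\<close>
        by (intro mult_nonneg_nonpos) auto
      finally show ?thesis .
    qed
    then show "\<exists>y. DERIV g t :> y \<and> y \<le> 0" using D by blast
  qed
  then have "cos u * exp (u\<^sup>2 / 2) \<le> 1" by (simp add: g_def)
  then show ?thesis by (simp add: exp_minus field_simps)
qed

lemma abs_cos_bound: "\<bar>cos (pi * y)\<bar> \<le> exp (- (pi\<^sup>2 * (dist_int y)\<^sup>2 / 2))"
proof -
  have "\<bar>cos (pi * y)\<bar> \<le> exp (- (pi * dist_int y)\<^sup>2 / 2)"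
    unfolding abs_cos_dist using dist_int_le[of y]
    by (intro cos_exp_bound) auto
  then show ?thesis by (simp add: power_mult_distrib)
qed

theorem lemma3p1:
  fixes N :: nat and x \<delta> :: real
  assumes "N \<ge> 1" and "x \<ge> 0" and "\<delta> \<ge> 0"
  shows "\<bar>rho N x\<bar> \<le> exp (- (pi\<^sup>2 * \<delta>\<^sup>2 / 2) * real (card (S_set 1 N \<delta> x)))"
proof -
  define S where "S = S_set 1 N \<delta> x"
  define c where "c = exp (- (pi\<^sup>2 * \<delta>\<^sup>2 / 2))"
  define f where "f = (\<lambda>n::nat. if n \<in> S then c else 1)"
  have S_sub: "S \<subseteq> {1..N}" by (auto simp: S_def S_set_def)
  have each: "\<bar>cos (pi * x / real n)\<bar> \<le> f n" if n: "n \<in> {1..N}" for n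
  proof (cases "n \<in> S")
    case True
    then have d: "dist_int (x / real n) \<ge> \<delta>" by (simp add: S_def S_set_def)
    have "\<bar>cos (pi * x / real n)\<bar> \<le> exp (- (pi\<^sup>2 * (dist_int (x / real n))\<^sup>2 / 2))"
      using abs_cos_bound[of "x / real n"] by simp
    also have "\<dots> \<le> c" unfolding c_def
      using d assms(3) by (auto intro!: mult_left_mono power_mono)
    finally show ?thesis using True by (simp add: f_def)
  qed (simp add: f_def)
  have "\<bar>rho N x\<bar> = (\<Prod>n=1..N. \<bar>cos (pi * x / real n)\<bar>)"
    by (simp add: rho_def abs_prod)
  also have "\<dots> \<le> (\<Prod>n=1..N. f n)"
    by (intro prod_mono) (use each in auto)
  also have "(\<Prod>n=1..N. f n) = c ^ card S"
    unfolding f_def using S_sub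
    by (subst prod.If_cases) (auto simp: Int_absorb1 Int_absorb2)
  also have "\<dots> = exp (- (pi\<^sup>2 * \<delta>\<^sup>2 / 2) * real (card S))"
    unfolding c_def by (simp add: exp_of_nat_mult[symmetric] mult.commute)
  finally show ?thesis by (simp add: S_def)
qed

end
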